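(* Consider an instance of the MSSN-MC-HC problem with $m=|Q|$ sources and costs $c_s>0$, $c_r>0$, for which there exists a feasible solution using exactly one sink. Assume $\frac{c_s}{c_r}\ge \overline{m}(\overline{m}+1)(h_{\max}-1)$ for some integer $\overline{m}$ with $1\le\overline{m}<m$. Then: (1) the number of sinks picked by SmartSelect is at most $\lceil\frac{m}{\overline{m}+1}\rceil$; (2) the approximation ratio of SmartSelect on such instances (cost of its output divided by the optimum cost) is at most $\epsilon+\frac{m}{\overline{m}}$, where $\epsilon\in[0,1)$ is defined by $\lceil\frac{m}{\overline{m}+1}\rceil=\frac{m}{\overline{m}+1}+\epsilon$.
   Context: MSSN-MC-HC problem: given a finite undirected graph $G=(V,E)$ with $V=Q\cup R\cup B$ (pairwise disjoint; $Q$ = sources, $R$ = potential relay locations, $B$ = potential sink locations), costs $c_s$ per sink and $c_r$ per relay, and a positive integer $h_{\max}$, select $B'\subseteq B$, $R'\subseteq R$ such that in the subgraph induced by $Q\cup R'\cup B'$ every source has a path of at most $h_{\max}$ edges to some sink of $B'$ (a feasible solution), minimizing $c_s|B'|+c_r|R'|$. A feasible solution "using exactly one sink" has $|B'|=1$. SmartSelect algorithm: (1) If for some $b\in B$ every source has a path of at most $h_{\max}$ edges to $b$ in the subgraph induced by $Q\cup B$, output $(\{b\},\emptyset)$. (2) If some source has no path of at most $h_{\max}$ edges in $G$ to any sink, declare infeasible. (3) For each $b_i\in B$ let $Q_i$ be the set of sources whose shortest path to $b_i$ in $G$ has at most $h_{\max}$ edges, and $R_i$ the set of relays whose shortest path to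 $b_i$ has at most $h_{\max}-1$ edges. (4) Greedy phase, iterations $j=0,1,\dots$: $B^{(0)}=B$, $Q_i^{(0)}=Q_i$; $B^{(j)}$ is the set of sinks not yet picked and $Q_i^{(j)}$ the set of sources of $Q_i$ not yet covered. In iteration $j$, for each $b_i\in B^{(j)}$, a relay-selection subroutine (e.g. the SPTiRP algorithm) applied to the subgraph of $G$ induced by $Q_i^{(j)}\cup R_i\cup\{b_i\}$ returns a set $\hat R_i^{(j)}\subseteq R_i$ consisting of the relays on one chosen path of at most $h_{\max}$ edges from each source of $Q_i^{(j)}$ to $b_i$. Let $n_i^{(j)}$ be the number of relays in $\hat R_i^{(j)}$ not selected in earlier iterations (earlier-selected relays have cost zero thereafter), and $C_i^{(j)}=\frac{c_s+c_r n_i^{(j)}}{|Q_i^{(j)}|}$. The sink $b_i$ with least $C_i^{(j)}$ is picked (ties broken in favor of larger $|Q_i^{(j)}|$), its sources $Q_i^{(j)}$ become covered and the relays $\hat R_i^{(j)}$ are selected. Stop when all sources are covered; output the picked sinks and selected relays. *)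

theory Defs
  imports Complex_Main
begin

text \<open>A path is a nonempty list of distinct vertices with consecutive vertices adjacent;
  its number of edges is length - 1.  A path "in the subgraph induced by S" has
  all its vertices in S.\<close>

definition is_hpath :: "('v \<times> 'v) set \<Rightarrow> 'v set \<Rightarrow> 'v list \<Rightarrow> 'v \<Rightarrow> 'v \<Rightarrow> bool" where
  "is_hpath E S p u v \<longleftrightarrow> p \<noteq> [] \<and> hd p = u \<and> last p = v \<and> distinct p \<and> set p \<subseteq> S \<and>
     (\<forall>i. Suc i < length p \<longrightarrow> (p ! i, p ! Suc i) \<in> E)"

definition reach_within :: "('v \<times> 'v) set \<Rightarrow> 'v set \<Rightarrow> nat \<Rightarrow> 'v \<Rightarrow> 'v \<Rightarrow> bool" where
  "reach_within E S k u v \<longleftrightarrow> (\<exists>p. is_hpath E S p u v \<and> length p \<le> Suc k)"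

definition mssn_instance ::
  "('v \<times> 'v) set \<Rightarrow> 'v set \<Rightarrow> 'v set \<Rightarrow> 'v set \<Rightarrow> real \<Rightarrow> real \<Rightarrow> nat \<Rightarrow> bool" where
  "mssn_instance E Q R B cs cr h \<longleftrightarrow>
     finite Q \<and> finite R \<and> finite B \<and>
     Q \<inter> R = {} \<and> Q \<inter> B = {} \<and> R \<inter> B = {} \<and>
     E \<subseteq> (Q \<union> R \<union> B) \<times> (Q \<union> R \<union> B) \<and> sym E \<and> (\<forall>x. (x, x) \<notin> E) \<and>
     h \<ge> 1 \<and> cs > 0 \<and> cr > 0"

definition feasible ::
  "('v \<times> 'v) set \<Rightarrow> 'v set \<Rightarrow> 'v set \<Rightarrow> 'v set \<Rightarrow> nat \<Rightarrow> 'v set \<Rightarrow> 'v set \<Rightarrow> bool" where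
  "feasible E Q R B h B' R' \<longleftrightarrow> B' \<subseteq> B \<and> R' \<subseteq> R \<and>
     (\<forall>q\<in>Q. \<exists>b\<in>B'. reach_within E (Q \<union> R' \<union> B') h q b)"

definition cost :: "real \<Rightarrow> real \<Rightarrow> 'v set \<Rightarrow> 'v set \<Rightarrow> real" where
  "cost cs cr B' R' = cs * real (card B') + cr * real (card R')"

definition opt_cost ::
  "('v \<times> 'v) set \<Rightarrow> 'v set \<Rightarrow> 'v set \<Rightarrow> 'v set \<Rightarrow> real \<Rightarrow> real \<Rightarrow> nat \<Rightarrow> real" where
  "opt_cost E Q R B cs cr h = Min {cost cs cr B' R' | B' R'. feasible E Q R B h B' R'}"

definition srcs_of :: "('v \<times> 'v) set \<Rightarrow> 'v set \<Rightarrow> 'v set \<Rightarrow> 'v set \<Rightarrow> nat \<Rightarrow> 'v \<Rightarrow> 'v set" where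
  "srcs_of E Q R B h b = {q \<in> Q. reach_within E (Q \<union> R \<union> B) h q b}"

definition rels_of :: "('v \<times> 'v) set \<Rightarrow> 'v set \<Rightarrow> 'v set \<Rightarrow> 'v set \<Rightarrow> nat \<Rightarrow> 'v \<Rightarrow> 'v set" where
  "rels_of E Q R B h b = {r \<in> R. reach_within E (Q \<union> R \<union> B) (h - 1) r b}"

text \<open>Admissible output X of the relay-selection subroutine applied to the subgraph induced by
  S \<union> R_i \<union> {b}: the relays on one chosen path of at most h edges (in that subgraph)
  from each source of S to b.\<close>
definition subroutine_output ::
  "('v \<times> 'v) set \<Rightarrow> 'v set \<Rightarrow> 'v set \<Rightarrow> 'v set \<Rightarrow> nat \<Rightarrow> 'v set \<Rightarrow> 'v \<Rightarrow> 'v set \<Rightarrow> bool" where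
  "subroutine_output E Q R B h S b X \<longleftrightarrow>
     (\<exists>P. (\<forall>q\<in>S. is_hpath E (S \<union> rels_of E Q R B h b \<union> {b}) (P q) q b \<and> length (P q) \<le> Suc h)
          \<and> X = (\<Union>q\<in>S. set (P q)) \<inter> R)"

text \<open>Sinks with no uncovered source in Q_i
  are not candidates (their ratio would be undefined).\<close>
definition greedy_step ::
  "('v \<times> 'v) set \<Rightarrow> 'v set \<Rightarrow> 'v set \<Rightarrow> 'v set \<Rightarrow> real \<Rightarrow> real \<Rightarrow> nat \<Rightarrow>
   'v set \<Rightarrow> 'v set \<Rightarrow> 'v set \<Rightarrow> 'v set \<Rightarrow> 'v set \<Rightarrow> 'v set \<Rightarrow> bool" where
  "greedy_step E Q R B cs cr h Cov Pk Sel Cov' Pk' Sel' \<longleftrightarrow>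
     Cov \<noteq> Q \<and>
     (let cand = {b \<in> B - Pk. srcs_of E Q R B h b - Cov \<noteq> {}} in
      \<exists>out b0.
        (\<forall>b\<in>cand. subroutine_output E Q R B h (srcs_of E Q R B h b - Cov) b (out b)) \<and>
        (let ratio = (\<lambda>b. (cs + cr * real (card (out b - Sel))) / real (card (srcs_of E Q R B h b - Cov)))
         in b0 \<in> cand \<and>
            (\<forall>b\<in>cand. ratio b0 < ratio b \<or>
               (ratio b0 = ratio b \<and> card (srcs_of E Q R B h b - Cov) \<le> card (srcs_of E Q R B h b0 - Cov)))) \<and>
        Cov' = Cov \<union> srcs_of E Q R B h b0 \<and> Pk' = insert b0 Pk \<and> Sel' = Sel \<union> out b0)"

definition greedy_rel ::
  "('v \<times> 'v) set \<Rightarrow> 'v set \<Rightarrow> 'v set \<Rightarrow> 'v set \<Rightarrow> real \<Rightarrow> real \<Rightarrow> nat \<Rightarrow>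
   'v set \<times> 'v set \<times> 'v set \<Rightarrow> 'v set \<times> 'v set \<times> 'v set \<Rightarrow> bool" where
  "greedy_rel E Q R B cs cr h = (\<lambda>(Cov, Pk, Sel) (Cov', Pk', Sel').
      greedy_step E Q R B cs cr h Cov Pk Sel Cov' Pk' Sel')"

text \<open>(B', R') is a possible output of SmartSelect (for some admissible subroutine outputs and
  some resolution of the remaining ties).\<close>
definition smartselect_output ::
  "('v \<times> 'v) set \<Rightarrow> 'v set \<Rightarrow> 'v set \<Rightarrow> 'v set \<Rightarrow> real \<Rightarrow> real \<Rightarrow> nat \<Rightarrow> 'v set \<Rightarrow> 'v set \<Rightarrow> bool" where
  "smartselect_output E Q R B cs cr h B' R' \<longleftrightarrow>
     (if \<exists>b\<in>B. \<forall>q\<in>Q. reach_within E (Q \<union> B) h q b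
      then (\<exists>b\<in>B. (\<forall>q\<in>Q. reach_within E (Q \<union> B) h q b) \<and> B' = {b} \<and> R' = {})
      else (\<forall>q\<in>Q. \<exists>b\<in>B. reach_within E (Q \<union> R \<union> B) h q b) \<and>
           (greedy_rel E Q R B cs cr h)\<^sup>*\<^sup>* ({}, {}, {}) (Q, B', R'))"

end

theory Submission
  imports Defs
begin

lemma reach_within_mono:
  "reach_within E S k u v \<Longrightarrow> S \<subseteq> T \<Longrightarrow> reach_within E T k u v"
  unfolding reach_within_def is_hpath_def by blast

lemma path_relays:
  assumes "is_hpath E S p q b" "length p \<le> Suc h" "q \<noteq> b"
  shows "card (set p - {q, b}) \<le> h - 1"
proof -
  from assms have ne: "p \<noteq> []" and d: "distinct p" and hq: "hd p = q" and lb: "last p = b"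
    unfolding is_hpath_def by auto
  have "q \<in> set p" using ne hq by auto
  moreover have "b \<in> set p" using ne lb by auto
  ultimately have sub: "{q,b} \<subseteq> set p" by auto
  have "card (set p - {q,b}) = card (set p) - card {q,b}"
    using sub by (simp add: card_Diff_subset)
  also have "\<dots> = length p - 2" using d assms(3) by (simp add: distinct_card)
  finally show ?thesis using assms(2) by simp
qed

lemma subroutine_card:
  assumes "subroutine_output E Q R B h S b X" "finite S" "S \<subseteq> Q" "b \<in> B"
    "Q \<inter> R = {}" "Q \<inter> B = {}" "R \<inter> B = {}"
  shows "finite X \<and> card X \<le> card S * (h - 1) \<and> X \<subseteq> R"
proof -
  obtain P where P: "\<forall>q\<in>S. is_hpath E (S \<union> rels_of E Q R B h b \<union> {b}) (P q) q b \<and> length (P q) \<le> Suc h"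
    and X: "X = (\<Union>q\<in>S. set (P q)) \<inter> R"
    using assms(1) unfolding subroutine_output_def by blast
  have X': "X = (\<Union>q\<in>S. set (P q) \<inter> R)" using X by auto
  have each: "card (set (P q) \<inter> R) \<le> h - 1" if "q \<in> S" for q
  proof -
    have qb: "q \<noteq> b" using that assms(3,4,6) by auto
    have "set (P q) \<inter> R \<subseteq> set (P q) - {q,b}" using that assms(3,4,5,7) by auto
    hence "card (set (P q) \<inter> R) \<le> card (set (P q) - {q,b})" by (intro card_mono) auto
    also have "\<dots> \<le> h - 1" using path_relays[of E _ "P q" q b h] P that qb by blast
    finally show ?thesis .
  qed
  have "card X \<le> (\<Sum>q\<in>S. card (set (P q) \<inter> R))" unfolding X' by (rule card_UN_le[OF assms(2)])
  also have "\<dots> \<le> card S * (h - 1)" using each sum_bounded_above[of S "\<lambda>q. card (set (P q) \<inter> R)" "h-1"] by simp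
  finally show ?thesis using X' X assms(2) by auto
qed

lemma key_arith:
  fixes cs c :: real and t k mb :: nat
  assumes "0 < cs" "0 \<le> c" "c * (real mb * (real mb + 1)) \<le> cs" "1 \<le> t" "t \<le> mb" "t < k"
  shows "cs / real k + c \<le> cs / real t"
proof -
  have pos: "0 < real mb * (real mb + 1)" using assms by simp
  have "c \<le> cs / (real mb * (real mb + 1))" using assms(3) pos by (simp add: pos_le_divide_eq)
  also have "\<dots> \<le> cs / (real t * (real t + 1))"
    using assms by (intro divide_left_mono mult_mono) auto
  also have "\<dots> = cs / real t - cs / (real t + 1)" using assms by (simp add: field_simps)
  also have "cs / (real t + 1) \<ge> cs / real k"
    using assms by (intro divide_left_mono) auto
  hence "cs / real t - cs / (real t + 1) \<le> cs / real t - cs / real k" by simp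
  finally show ?thesis by simp
qed


definition Inv where
 "Inv E Q R B h mb Cov Pk Sel \<longleftrightarrow> Cov \<subseteq> Q \<and> Pk \<subseteq> B \<and> finite Pk \<and> Sel \<subseteq> R \<and>
   card Sel \<le> card Cov * (h - 1) \<and> (\<forall>b\<in>Pk. srcs_of E Q R B h b \<subseteq> Cov) \<and>
   ((mb+1) * card Pk \<le> card Cov \<or> (Cov = Q \<and> (mb+1) * (card Pk - 1) < card Q))"

lemma step_inv:
  assumes inst: "mssn_instance E Q R B cs cr h"
    and bs: "bs \<in> B" "srcs_of E Q R B h bs = Q"
    and rat: "cr * real (h - 1) * (real mb * (real mb + 1)) \<le> cs"
    and I: "Inv E Q R B h mb Cov Pk Sel"
    and st: "greedy_step E Q R B cs cr h Cov Pk Sel Cov' Pk' Sel'"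
  shows "Inv E Q R B h mb Cov' Pk' Sel'"
proof -
  have fQ: "finite Q" and fR: "finite R" and dQR: "Q \<inter> R = {}" and dQB: "Q \<inter> B = {}" and dRB: "R \<inter> B = {}"
    and cs0: "cs > 0" and cr0: "cr > 0" and h1: "h \<ge> 1"
    using inst unfolding mssn_instance_def by auto
  define srcs where "srcs = srcs_of E Q R B h"
  have srcsQ: "\<And>b. srcs b \<subseteq> Q" unfolding srcs_def srcs_of_def by auto
  have fin: "\<And>b. finite (srcs b - Cov)" using srcsQ fQ by (meson finite_Diff finite_subset)
  define cand where "cand = {b \<in> B - Pk. srcs b - Cov \<noteq> {}}"
  from st obtain out b0 where
    CovQ: "Cov \<noteq> Q" and
    outs: "\<forall>b\<in>cand. subroutine_output E Q R B h (srcs b - Cov) b (out b)" and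
    b0c: "b0 \<in> cand" and
    choice: "\<forall>b\<in>cand. (cs + cr * real (card (out b0 - Sel))) / real (card (srcs b0 - Cov)) < (cs + cr * real (card (out b - Sel))) / real (card (srcs b - Cov)) \<or> ((cs + cr * real (card (out b0 - Sel))) / real (card (srcs b0 - Cov)) = (cs + cr * real (card (out b - Sel))) / real (card (srcs b - Cov)) \<and> card (srcs b - Cov) \<le> card (srcs b0 - Cov))" and
    eqs: "Cov' = Cov \<union> srcs b0" "Pk' = insert b0 Pk" "Sel' = Sel \<union> out b0"
    using st unfolding greedy_step_def Let_def cand_def srcs_def by blast
  from I have CQ: "Cov \<subseteq> Q" and PB: "Pk \<subseteq> B" and fP: "finite Pk" and SR: "Sel \<subseteq> R"
    and cS: "card Sel \<le> card Cov * (h - 1)" and Pcov: "\<forall>b\<in>Pk. srcs b \<subseteq> Cov"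
    and cnt: "(mb+1) * card Pk \<le> card Cov \<or> (Cov = Q \<and> (mb+1) * (card Pk - 1) < card Q)"
    unfolding Inv_def srcs_def by auto
  have cnt1: "(mb+1) * card Pk \<le> card Cov" using cnt CovQ by auto
  define t where "t = card (srcs b0 - Cov)"
  define k where "k = card (Q - Cov)"
  have b0B: "b0 \<in> B" "b0 \<notin> Pk" using b0c unfolding cand_def by auto
  have t1: "t \<ge> 1" using b0c fin[of b0] unfolding cand_def t_def
    by (simp add: Suc_le_eq card_gt_0_iff)
  have sbs: "srcs bs = Q" using bs(2) unfolding srcs_def .
  have bsP: "bs \<notin> Pk" using Pcov sbs CQ CovQ by auto
  have bsc: "bs \<in> cand" unfolding cand_def using bs(1) bsP sbs CQ CovQ by auto
  have out0: "finite (out b0) \<and> card (out b0) \<le> t * (h - 1) \<and> out b0 \<subseteq> R"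
    unfolding t_def
    by (rule subroutine_card[OF _ fin _ b0B(1) dQR dQB dRB]) (use outs b0c srcsQ in auto)
  have key: "t \<ge> mb + 1 \<or> t \<ge> k"
  proof (rule ccontr)
    assume "\<not> ?thesis"
    hence tm: "t \<le> mb" and tk: "t < k" by auto
    have "finite (out bs) \<and> card (out bs) \<le> card (srcs bs - Cov) * (h - 1) \<and> out bs \<subseteq> R"
      by (rule subroutine_card[OF _ fin _ bs(1) dQR dQB dRB]) (use outs bsc srcsQ in auto)
    hence cb: "card (out bs - Sel) \<le> k * (h - 1)" unfolding k_def sbs[symmetric]
      by (meson card_mono Diff_subset le_trans finite_Diff)
    have k0: "real k > 0" using tk by simp
    have "(cs + cr * real (card (out bs - Sel))) / real k \<le> (cs + cr * real (k * (h - 1))) / real k"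
      using of_nat_mono[OF cb, where 'a=real] cr0 k0 by (intro divide_right_mono add_left_mono mult_left_mono) auto
    also have "\<dots> = cs / real k + cr * real (h - 1)" using k0 by (simp add: field_simps)
    also have "\<dots> \<le> cs / real t"
      by (rule key_arith[OF cs0 _ _ t1 tm tk]) (use cr0 rat in auto)
    also have "\<dots> \<le> (cs + cr * real (card (out b0 - Sel))) / real t"
      using t1 cr0 by (intro divide_right_mono) auto
    finally have "(cs + cr * real (card (out bs - Sel))) / real (card (srcs bs - Cov))
       \<le> (cs + cr * real (card (out b0 - Sel))) / real (card (srcs b0 - Cov))"
      unfolding t_def k_def sbs .
    moreover have "card (srcs bs - Cov) = k" unfolding k_def sbs ..
    ultimately show False using choice[rule_format, OF bsc] tk unfolding t_def by linarith
  qed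
  have disj: "Cov' = Cov \<union> (srcs b0 - Cov)" using eqs by auto
  have cCov': "card Cov' = card Cov + t"
    unfolding disj t_def
    by (rule card_Un_disjoint) (use CQ fQ finite_subset fin in auto)
  have cPk': "card Pk' = card Pk + 1" using eqs b0B fP by simp
  have "card Sel' \<le> card Sel + card (out b0)" unfolding eqs by (rule card_Un_le)
  also have "\<dots> \<le> card Cov' * (h - 1)" using cS out0 cCov' by (simp add: add_mult_distrib)
  finally have cS': "card Sel' \<le> card Cov' * (h - 1)" .
  have cnt': "(mb+1) * card Pk' \<le> card Cov' \<or> (Cov' = Q \<and> (mb+1) * (card Pk' - 1) < card Q)"
  proof (cases "t \<ge> mb + 1")
    case True thus ?thesis using cnt1 cCov' cPk' by simp
  next
    case False
    hence "t \<ge> k" using key by simp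
    moreover have "srcs b0 - Cov \<subseteq> Q - Cov" using srcsQ by auto
    ultimately have "srcs b0 - Cov = Q - Cov" unfolding t_def k_def
      by (meson card_seteq fQ finite_Diff)
    hence "Cov' = Q" using eqs CQ by auto
    moreover have "card Cov < card Q" using CQ CovQ fQ by (meson psubsetI psubset_card_mono)
    ultimately show ?thesis using cnt1 cPk' by simp
  qed
  have a1: "Cov' \<subseteq> Q" using eqs CQ srcsQ by auto
  have a2: "Pk' \<subseteq> B" using eqs PB b0B by auto
  have a3: "finite Pk'" using eqs fP by auto
  have a4: "Sel' \<subseteq> R" using eqs SR out0 by auto
  have a5: "\<forall>b\<in>Pk'. srcs b \<subseteq> Cov'" using eqs Pcov by auto
  show ?thesis unfolding Inv_def
    using a1 a2 a3 a4 a5 cS' cnt' unfolding srcs_def by blast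
qed


lemma rt_inv:
  assumes inst: "mssn_instance E Q R B cs cr h"
    and bs: "bs \<in> B" "srcs_of E Q R B h bs = Q"
    and rat: "cr * real (h - 1) * (real mb * (real mb + 1)) \<le> cs"
    and rt: "(greedy_rel E Q R B cs cr h)\<^sup>*\<^sup>* s s'"
    and I: "case s of (Cov, Pk, Sel) \<Rightarrow> Inv E Q R B h mb Cov Pk Sel"
  shows "case s' of (Cov, Pk, Sel) \<Rightarrow> Inv E Q R B h mb Cov Pk Sel"
  using rt I
proof (induction rule: rtranclp_induct)
  case base thus ?case .
next
  case (step y z)
  obtain a b c where y: "y = (a, b, c)" by (cases y) auto
  obtain a' b' c' where z: "z = (a', b', c')" by (cases z) auto
  from step show ?case unfolding y z greedy_rel_def
    using step_inv[OF inst bs rat] by auto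
qed

theorem theorem1:
  fixes E :: "('v \<times> 'v) set" and Q R B :: "'v set" and cs cr :: real and h mb :: nat
  assumes inst: "mssn_instance E Q R B cs cr h"
    and one_sink: "\<exists>b\<in>B. \<exists>R'. feasible E Q R B h {b} R'"
    and mb: "1 \<le> mb" "mb < card Q"
    and ratio: "cs / cr \<ge> real mb * (real mb + 1) * (real h - 1)"
    and out: "smartselect_output E Q R B cs cr h B' R'"
  shows "card B' \<le> \<lceil>real (card Q) / (real mb + 1)\<rceil>
    \<and> cost cs cr B' R' / opt_cost E Q R B cs cr h
        \<le> (real_of_int \<lceil>real (card Q) / (real mb + 1)\<rceil> - real (card Q) / (real mb + 1))
           + real (card Q) / real mb"
proof -
  have fQ: "finite Q" and fR: "finite R" and fB: "finite B" and ER: "E \<subseteq> (Q \<union> R \<union> B) \<times> (Q \<union> R \<union> B)"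
    and cs0: "cs > 0" and cr0: "cr > 0" and h1: "h \<ge> 1"
    using inst unfolding mssn_instance_def by auto
  obtain bs R0 where bs: "bs \<in> B" and fe: "feasible E Q R B h {bs} R0" using one_sink by blast
  have srcs_bs: "srcs_of E Q R B h bs = Q"
  proof
    show "srcs_of E Q R B h bs \<subseteq> Q" unfolding srcs_of_def by auto
    show "Q \<subseteq> srcs_of E Q R B h bs"
    proof
      fix q assume q: "q \<in> Q"
      have R0: "R0 \<subseteq> R" using fe unfolding feasible_def by auto
      have "reach_within E (Q \<union> R0 \<union> {bs}) h q bs" using fe q unfolding feasible_def by auto
      hence "reach_within E (Q \<union> R \<union> B) h q bs" by (rule reach_within_mono) (use R0 bs in auto)
      thus "q \<in> srcs_of E Q R B h bs" unfolding srcs_of_def using q by auto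
    qed
  qed
  define m where "m = card Q"
  define x where "x = real m / (real mb + 1)"
  have hr: "real (h - 1) = real h - 1" using h1 by simp
  have rat: "cr * real (h - 1) * (real mb * (real mb + 1)) \<le> cs"
  proof -
    have "real mb * (real mb + 1) * (real h - 1) \<le> cs / cr" by (rule ratio)
    hence "real mb * (real mb + 1) * (real h - 1) * cr \<le> cs" using cr0 by (simp add: pos_le_divide_eq)
    thus ?thesis unfolding hr by (simp add: algebra_simps)
  qed
  have m2: "m \<ge> 2" using mb unfolding m_def by simp
  have xpos: "x > 0" unfolding x_def using m2 by simp
  have main: "card B' \<le> \<lceil>x\<rceil> \<and> finite B' \<and> card R' \<le> m * (h - 1)"
  proof (cases "\<exists>b\<in>B. \<forall>q\<in>Q. reach_within E (Q \<union> B) h q b")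
    case True
    then obtain b where "B' = {b}" "R' = {}" using out unfolding smartselect_output_def by auto
    thus ?thesis using xpos by simp
  next
    case False
    hence rt: "(greedy_rel E Q R B cs cr h)\<^sup>*\<^sup>* ({}, {}, {}) (Q, B', R')"
      using out unfolding smartselect_output_def by auto
    have "Inv E Q R B h mb Q B' R'"
      using rt_inv[OF inst bs srcs_bs rat rt] unfolding Inv_def by auto
    hence fB': "finite B'" and cR: "card R' \<le> m * (h - 1)"
      and cnt: "(mb+1) * card B' \<le> m \<or> (mb+1) * (card B' - 1) < m"
      unfolding Inv_def m_def by auto
    have "real (card B') - 1 < x"
    proof (cases "(mb+1) * card B' \<le> m")
      case True
      hence "real ((mb+1) * card B') \<le> real m" by linarith
      hence "real (card B') * (real mb + 1) \<le> real m" by (simp add: algebra_simps)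
      hence "real (card B') \<le> x" unfolding x_def by (simp add: pos_le_divide_eq)
      thus ?thesis by simp
    next
      case False
      hence c: "(mb+1) * (card B' - 1) < m" using cnt by simp
      show ?thesis
      proof (cases "card B' = 0")
        case True thus ?thesis using xpos by simp
      next
        case nz: False
        then obtain n where n: "card B' = Suc n" using not0_implies_Suc by blast
        have "(mb+1) * n < m" using c n by simp
        hence "real ((mb+1) * n) < real m" by (simp only: of_nat_less_iff)
        hence "real n * (real mb + 1) < real m" by (simp add: algebra_simps)
        hence "real n < x" unfolding x_def by (simp add: pos_less_divide_eq)
        thus ?thesis using n by simp
      qed
    qed
    hence "int (card B') \<le> \<lceil>x\<rceil>" by (simp add: le_ceiling_iff)
    thus ?thesis using fB' cR by simp
  qed
  define S where "S = {cost cs cr B'' R'' | B'' R''. feasible E Q R B h B'' R''}"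
  have Ssub: "S \<subseteq> (\<lambda>(a, b). cost cs cr a b) ` (Pow B \<times> Pow R)"
    unfolding S_def feasible_def by auto
  have finS: "finite S" using finite_subset[OF Ssub] fB fR by auto
  have neS: "S \<noteq> {}" unfolding S_def using fe by auto
  have "opt_cost E Q R B cs cr h \<in> S" unfolding opt_cost_def S_def[symmetric]
    using finS neS by (rule Min_in)
  then obtain B0 R0' where opt: "opt_cost E Q R B cs cr h = cost cs cr B0 R0'"
    and f0: "feasible E Q R B h B0 R0'" unfolding S_def by auto
  have "Q \<noteq> {}" using m2 unfolding m_def by auto
  then obtain q where "q \<in> Q" by auto
  hence "B0 \<noteq> {}" using f0 unfolding feasible_def by auto
  moreover have "finite B0" using f0 fB unfolding feasible_def by (auto intro: finite_subset)
  ultimately have "card B0 \<ge> 1" by (simp add: Suc_le_eq card_gt_0_iff)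
  hence "real (card B0) \<ge> 1" by simp
  hence "cs * 1 \<le> cs * real (card B0)" using cs0 by (intro mult_left_mono) auto
  moreover have "0 \<le> cr * real (card R0')" using cr0 by simp
  ultimately have optge: "opt_cost E Q R B cs cr h \<ge> cs"
    unfolding opt cost_def by linarith
  define N where "N = card B'"
  define rr where "rr = card R'"
  have N: "real N \<le> real_of_int \<lceil>x\<rceil>" using main unfolding N_def by linarith
  have "rr \<le> m * (h - 1)" using main unfolding rr_def by simp
  hence "real rr \<le> real (m * (h - 1))" by (simp only: of_nat_le_iff)
  hence rrb: "real rr \<le> real m * real (h - 1)" by simp
  have cost_nn: "cost cs cr B' R' \<ge> 0" unfolding cost_def using cs0 cr0 by simp
  have "cost cs cr B' R' / opt_cost E Q R B cs cr h \<le> cost cs cr B' R' / cs"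
    using cost_nn optge cs0 by (intro divide_left_mono) auto
  also have "\<dots> = real N + cr * real rr / cs" unfolding cost_def N_def rr_def using cs0
    by (simp add: field_simps)
  also have "cr * real rr / cs \<le> real m / (real mb * (real mb + 1))"
  proof -
    have pos: "0 < real mb * (real mb + 1)" using mb by simp
    have "cr * real rr \<le> real m * (cr * real (h - 1))" using rrb cr0
      by (simp add: mult.left_commute mult_le_cancel_left_pos)
    also have "\<dots> \<le> real m * (cs / (real mb * (real mb + 1)))"
      using rat pos by (intro mult_left_mono) (auto simp: pos_le_divide_eq)
    finally show ?thesis using cs0 by (simp add: field_simps)
  qed
  hence "real N + cr * real rr / cs \<le> real_of_int \<lceil>x\<rceil> + real m / (real mb * (real mb + 1))"
    using N by linarith
  also have "real m / (real mb * (real mb + 1)) = real m / real mb - x"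
    unfolding x_def using mb by (simp add: field_simps)
  finally have fin: "cost cs cr B' R' / opt_cost E Q R B cs cr h \<le> (real_of_int \<lceil>x\<rceil> - x) + real m / real mb"
    by simp
  show ?thesis using main fin unfolding x_def m_def by simp
qed

end
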